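(* Let $\alpha=\alpha(0)$ be a graph function on a strongly connected digraph $G$, fix a fair infinite sequence of raising operations, and let $\alpha(t)$ and $r(t)$ be the resulting graph functions and raising vectors. Then the sequence $r(t)$ is (coordinatewise) non-decreasing and bounded above, and hence converges to a limit vector $r^*$ as $t\to\infty$.
   Context: $G$ is a strongly connected directed graph on vertex set $\{1,\dots,n\}$ (self-loops allowed); a graph function assigns a real weight $\alpha_{uv}$ to each edge. $\alpha_v^{\text{in}}=\max_{u:(u,v)\in G}\alpha_{uv}$, $\alpha_v^{\text{out}}=\max_{w:(v,w)\in G}\alpha_{vw}$, $\rho^R_v=\max\{0,\alpha_v^{\text{out}}-\alpha_v^{\text{in}}\}$. A raising operation at $v$: if $\rho^R_v>0$, add $\rho^R_v/2$ to each $\alpha_{uv}$ ($u\ne v$) and subtract $\rho^R_v/2$ from each $\alpha_{vw}$ ($w\ne v$), self-loop unchanged; otherwise do nothing. A sequence of operations is fair if every vertex occurs infinitely often. The raising vector is defined by $r(0)=0$ and, if the $t$-th operation is at vertex $v$, $r_v(t)=r_v(t-1)+\rho^R_v/2$ (with $\rho^R_v$ computed in $\alpha(t-1)$) and $r_u(t)=r_u(t-1)$ for $u\ne v$; thus $\alpha_{uv}(t)=\alpha_{uv}(0)+r_v(t)-r_u(t)$. *)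

theory Defs
  imports Complex_Main
begin

text \<open>Vertices are 1..n; a digraph G is a set of edges (pairs of vertices), self-loops allowed.
A graph function is a map alpha :: nat => nat => real; only its values on edges of G matter.\<close>

definition digraph_on :: "nat \<Rightarrow> (nat \<times> nat) set \<Rightarrow> bool" where
  "digraph_on n G \<longleftrightarrow> G \<subseteq> {1..n} \<times> {1..n}"

definition strongly_connected :: "nat \<Rightarrow> (nat \<times> nat) set \<Rightarrow> bool" where
  "strongly_connected n G \<longleftrightarrow> (\<forall>u\<in>{1..n}. \<forall>v\<in>{1..n}. (u, v) \<in> G\<^sup>*)"

definition alpha_in :: "(nat \<times> nat) set \<Rightarrow> (nat \<Rightarrow> nat \<Rightarrow> real) \<Rightarrow> nat \<Rightarrow> real" where
  "alpha_in G \<alpha> v = Max {\<alpha> u v | u. (u, v) \<in> G}"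

definition alpha_out :: "(nat \<times> nat) set \<Rightarrow> (nat \<Rightarrow> nat \<Rightarrow> real) \<Rightarrow> nat \<Rightarrow> real" where
  "alpha_out G \<alpha> v = Max {\<alpha> v w | w. (v, w) \<in> G}"

definition rhoR :: "(nat \<times> nat) set \<Rightarrow> (nat \<Rightarrow> nat \<Rightarrow> real) \<Rightarrow> nat \<Rightarrow> real" where
  "rhoR G \<alpha> v = max 0 (alpha_out G \<alpha> v - alpha_in G \<alpha> v)"

definition raise :: "(nat \<times> nat) set \<Rightarrow> (nat \<Rightarrow> nat \<Rightarrow> real) \<Rightarrow> nat \<Rightarrow> (nat \<Rightarrow> nat \<Rightarrow> real)" where
  "raise G \<alpha> v =
     (if rhoR G \<alpha> v > 0 then
        (\<lambda>x y. if (x, y) \<in> G \<and> y = v \<and> x \<noteq> v then \<alpha> x y + rhoR G \<alpha> v / 2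
               else if (x, y) \<in> G \<and> x = v \<and> y \<noteq> v then \<alpha> x y - rhoR G \<alpha> v / 2
               else \<alpha> x y)
      else \<alpha>)"

text \<open>The operation sequence: the t-th operation (t \<ge> 1) is at vertex s t.\<close>
fun alpha_seq :: "(nat \<times> nat) set \<Rightarrow> (nat \<Rightarrow> nat \<Rightarrow> real) \<Rightarrow> (nat \<Rightarrow> nat) \<Rightarrow> nat \<Rightarrow> (nat \<Rightarrow> nat \<Rightarrow> real)" where
  "alpha_seq G \<alpha>0 s 0 = \<alpha>0"
| "alpha_seq G \<alpha>0 s (Suc t) = raise G (alpha_seq G \<alpha>0 s t) (s (Suc t))"

fun r_seq :: "(nat \<times> nat) set \<Rightarrow> (nat \<Rightarrow> nat \<Rightarrow> real) \<Rightarrow> (nat \<Rightarrow> nat) \<Rightarrow> nat \<Rightarrow> (nat \<Rightarrow> real)" where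
  "r_seq G \<alpha>0 s 0 = (\<lambda>_. 0)"
| "r_seq G \<alpha>0 s (Suc t) =
     (r_seq G \<alpha>0 s t)(s (Suc t) := r_seq G \<alpha>0 s t (s (Suc t))
                          + rhoR G (alpha_seq G \<alpha>0 s t) (s (Suc t)) / 2)"

definition fair :: "nat \<Rightarrow> (nat \<Rightarrow> nat) \<Rightarrow> bool" where
  "fair n s \<longleftrightarrow> (\<forall>t\<ge>1. s t \<in> {1..n}) \<and> (\<forall>v\<in>{1..n}. infinite {t. s t = v})"

end

theory Submission imports Defs begin

definition walk :: "nat \<Rightarrow> (nat \<times> nat) set \<Rightarrow> nat list \<Rightarrow> bool" where
  "walk n G xs \<longleftrightarrow> xs \<noteq> [] \<and> set xs \<subseteq> {1..n} \<and> successively (\<lambda>x y. (x,y) \<in> G) xs"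

fun ww :: "(nat \<Rightarrow> nat \<Rightarrow> real) \<Rightarrow> nat list \<Rightarrow> real" where
  "ww a (x#y#xs) = a x y + ww a (y#xs)"
| "ww a _ = 0"

definition val :: "(nat \<Rightarrow> nat \<Rightarrow> real) \<Rightarrow> real \<Rightarrow> nat list \<Rightarrow> real" where
  "val a l xs = ww a xs - l * real (length xs - 1)"

lemma ww_append: "ww a (xs @ y # ys) = ww a (xs @ [y]) + ww a (y # ys)"
  by (induction xs rule: induct_list012) auto

lemma ww_snoc: "xs \<noteq> [] \<Longrightarrow> ww a (xs @ [y]) = ww a xs + a (last xs) y"
  by (induction xs rule: induct_list012) auto

lemma ww_split: "ww a (as @ [y] @ bs @ [y] @ cs) = ww a (as @ [y] @ cs) + ww a (y # bs @ [y])"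
proof -
  have "ww a (as @ [y] @ bs @ [y] @ cs) = ww a (as @ [y]) + ww a (y # bs @ y # cs)"
    using ww_append[of a as y "bs @ y # cs"] by simp
  also have "ww a (y # bs @ y # cs) = ww a ((y # bs) @ [y]) + ww a (y # cs)"
    using ww_append[of a "y#bs" y cs] by simp
  also have "ww a (as @ [y] @ cs) = ww a (as @ [y]) + ww a (y # cs)"
    using ww_append[of a as y cs] by simp
  ultimately show ?thesis by simp
qed

lemma val_split: "val a l (as @ [y] @ bs @ [y] @ cs) = val a l (as @ [y] @ cs) + val a l (y # bs @ [y])"
  unfolding val_def using ww_split[of a as y bs cs] by (simp add: algebra_simps)

lemma val_snoc: "xs \<noteq> [] \<Longrightarrow> val a l (xs @ [y]) = val a l xs + a (last xs) y - l"
  unfolding val_def using ww_snoc[of xs a y] by (cases xs) (auto simp: algebra_simps)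

lemma walk_split:
  assumes "walk n G (as @ [y] @ bs @ [y] @ cs)"
  shows "walk n G (as @ [y] @ cs)"
  using assms unfolding walk_def
  by (auto simp: successively_append_iff successively_Cons)

lemma walk_split2:
  assumes "walk n G (as @ [y] @ bs @ [y] @ cs)"
  shows "walk n G (y # bs @ [y])"
proof -
  let ?P = "\<lambda>x y. (x,y) \<in> G"
  have "successively ?P (as @ ((y # bs @ [y]) @ cs))" using assms unfolding walk_def by simp
  then have "successively ?P ((y # bs @ [y]) @ cs)" by (simp only: successively_append_iff)
  then have "successively ?P (y # bs @ [y])" by (simp only: successively_append_iff)
  then show ?thesis using assms unfolding walk_def by auto
qed

lemma walk_snoc:
  assumes "walk n G xs" "(last xs, y) \<in> G" "y \<in> {1..n}"
  shows "walk n G (xs @ [y])"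
  using assms unfolding walk_def by (auto simp: successively_append_iff)

lemma walk_long_not_distinct:
  assumes "walk n G xs" "length xs > n"
  shows "\<not> distinct xs"
proof
  assume "distinct xs"
  then have "card (set xs) = length xs" by (rule distinct_card)
  moreover have "card (set xs) \<le> n"
    using assms(1) unfolding walk_def by (metis card_atLeastAtMost card_mono finite_atLeastAtMost diff_Suc_1)
  ultimately show False using assms(2) by simp
qed

lemma long_not_distinct:
  assumes "set xs \<subseteq> {1..n}" "length xs > n"
  shows "\<not> distinct xs"
proof
  assume "distinct xs"
  then have "card (set xs) = length xs" by (rule distinct_card)
  moreover have "card (set xs) \<le> n"
    using assms(1) by (metis card_atLeastAtMost card_mono finite_atLeastAtMost diff_Suc_1)
  ultimately show False using assms(2) by simp
qed

definition cw :: "nat \<Rightarrow> (nat \<times> nat) set \<Rightarrow> nat list \<Rightarrow> bool" where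
  "cw n G c \<longleftrightarrow> walk n G c \<and> 2 \<le> length c \<and> hd c = last c"

lemma cw_decomp:
  assumes "cw n G c" "length c > n + 1"
  obtains c1 c2 where "cw n G c1" "cw n G c2" "length c1 < length c" "length c2 < length c"
    "val a l c = val a l c1 + val a l c2"
proof -
  obtain z t where c: "c = z # t" using assms unfolding cw_def by (cases c) auto
  have "set t \<subseteq> {1..n}" using assms(1) c unfolding cw_def walk_def by auto
  moreover have "length t > n" using assms(2) c by simp
  ultimately have "\<not> distinct t" by (rule long_not_distinct)
  then obtain as y bs cs where t: "t = as @ [y] @ bs @ [y] @ cs" using not_distinct_decomp by blast
  have c': "c = (z # as) @ [y] @ bs @ [y] @ cs" using c t by simp
  have wc: "walk n G c" using assms(1) unfolding cw_def by simp
  have w: "walk n G ((z # as) @ [y] @ bs @ [y] @ cs)" unfolding c'[symmetric] by (rule wc)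
  have hl: "hd c = last c" using assms(1) unfolding cw_def by simp
  have "last ((z # as) @ [y] @ cs) = last c" using c' by (cases cs) auto
  moreover have "hd ((z # as) @ [y] @ cs) = hd c" using c' by simp
  ultimately have "cw n G ((z # as) @ [y] @ cs)"
    using walk_split[OF w] hl unfolding cw_def by simp
  moreover have "cw n G (y # bs @ [y])"
    using walk_split2[OF w] unfolding cw_def by auto
  moreover have "val a l c = val a l ((z # as) @ [y] @ cs) + val a l (y # bs @ [y])"
    using c' val_split by metis
  ultimately show ?thesis using that c' by fastforce
qed

lemma cw_val_le:
  assumes short: "\<forall>c. cw n G c \<and> length c \<le> n+1 \<longrightarrow> val a l c \<le> 0"
  shows "cw n G c \<Longrightarrow> val a l c \<le> 0"
proof (induction "length c" arbitrary: c rule: less_induct)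
  case less
  show ?case
  proof (cases "length c \<le> n + 1")
    case True then show ?thesis using short less by blast
  next
    case False
    then obtain c1 c2 where "cw n G c1" "cw n G c2" "length c1 < length c" "length c2 < length c"
      "val a l c = val a l c1 + val a l c2" using cw_decomp[OF less(2)] by (metis not_le)
    moreover have "val a l c1 \<le> 0" "val a l c2 \<le> 0" using less(1) calculation by blast+
    ultimately show ?thesis by linarith
  qed
qed

lemma cw_short_ex:
  shows "cw n G c \<Longrightarrow> \<exists>c'. cw n G c' \<and> length c' \<le> n + 1"
proof (induction "length c" arbitrary: c rule: less_induct)
  case less
  show ?case
  proof (cases "length c \<le> n + 1")
    case True then show ?thesis using less by blast
  next
    case False
    then obtain c1 c2 :: "nat list" where "cw n G c1" "length c1 < length c"
      using cw_decomp[OF less(2), of "\<lambda>_ _. 0" 0] by (metis not_le)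
    then show ?thesis using less(1) by blast
  qed
qed

lemma path_short:
  assumes cyc: "\<forall>c. cw n G c \<longrightarrow> val a l c \<le> 0"
  shows "walk n G xs \<Longrightarrow> \<exists>ys. walk n G ys \<and> hd ys = hd xs \<and> last ys = last xs \<and> length ys \<le> n \<and> val a l xs \<le> val a l ys"
proof (induction "length xs" arbitrary: xs rule: less_induct)
  case less
  show ?case
  proof (cases "length xs \<le> n")
    case True then show ?thesis using less by blast
  next
    case False
    then have "\<not> distinct xs" using less(2) long_not_distinct unfolding walk_def by (metis not_le)
    then obtain as y bs cs where x: "xs = as @ [y] @ bs @ [y] @ cs" using not_distinct_decomp by blast
    have w: "walk n G (as @ [y] @ bs @ [y] @ cs)" using less(2) x by simp
    have w1: "walk n G (as @ [y] @ cs)" using walk_split[OF w] .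
    have c2: "cw n G (y # bs @ [y])" using walk_split2[OF w] unfolding cw_def by auto
    have v: "val a l xs = val a l (as @ [y] @ cs) + val a l (y # bs @ [y])"
      using x val_split by metis
    have "length (as @ [y] @ cs) < length xs" using x by simp
    then obtain ys where ys: "walk n G ys" "hd ys = hd (as @ [y] @ cs)" "last ys = last (as @ [y] @ cs)"
      "length ys \<le> n" "val a l (as @ [y] @ cs) \<le> val a l ys"
      using less(1) w1 by blast
    have "hd (as @ [y] @ cs) = hd xs" using x by (cases as) auto
    moreover have "last (as @ [y] @ cs) = last xs" using x by (cases cs) auto
    moreover have "val a l xs \<le> val a l ys" using v ys(5) cyc c2 by fastforce
    ultimately show ?thesis using ys by metis
  qed
qed


lemma rho_nonneg: "0 \<le> rhoR G a v" unfolding rhoR_def by simp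

lemma alpha_r:
  "\<forall>x y. (x,y) \<in> G \<longrightarrow> alpha_seq G \<alpha> s t x y = \<alpha> x y + r_seq G \<alpha> s t y - r_seq G \<alpha> s t x"
proof (induction t)
  case 0 then show ?case by simp
next
  case (Suc t)
  show ?case
  proof (intro allI impI)
    fix x y assume e: "(x,y) \<in> G"
    define a where "a = alpha_seq G \<alpha> s t"
    define v where "v = s (Suc t)"
    define r where "r = r_seq G \<alpha> s t"
    have IH: "a x y = \<alpha> x y + r y - r x" using Suc e unfolding a_def r_def by blast
    have A: "alpha_seq G \<alpha> s (Suc t) = raise G a v" unfolding a_def v_def by simp
    have R: "r_seq G \<alpha> s (Suc t) = r(v := r v + rhoR G a v / 2)" unfolding a_def v_def r_def by simp
    show "alpha_seq G \<alpha> s (Suc t) x y = \<alpha> x y + r_seq G \<alpha> s (Suc t) y - r_seq G \<alpha> s (Suc t) x"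
    proof (cases "rhoR G a v > 0")
      case True
      then show ?thesis unfolding A R raise_def using IH e by auto
    next
      case False
      then have "rhoR G a v = 0" using rho_nonneg[of G a v] by linarith
      then show ?thesis unfolding A R raise_def using IH e by auto
    qed
  qed
qed

lemma r_step_ge: "r_seq G \<alpha> s t v \<le> r_seq G \<alpha> s (Suc t) v"
  using rho_nonneg by auto

lemma r_mono: "mono (\<lambda>t. r_seq G \<alpha> s t v)"
  by (rule incseq_SucI) (rule r_step_ge)

lemma fin_in: "finite G \<Longrightarrow> finite {a u v | u. (u,v) \<in> G}"
  by (rule finite_subset[of _ "(\<lambda>p. a (fst p) (snd p)) ` G"]) force+

lemma fin_out: "finite G \<Longrightarrow> finite {a v w | w. (v,w) \<in> G}"
  by (rule finite_subset[of _ "(\<lambda>p. a (fst p) (snd p)) ` G"]) force+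

lemma key:
  assumes fin: "finite G"
    and ex: "(\<exists>u. (u,v)\<in>G) \<longleftrightarrow> (\<exists>w. (v,w) \<in> G)"
    and inq: "\<forall>u. (u,v)\<in>G \<longrightarrow> b u v - d \<le> a u v"
    and outq: "\<forall>w. (v,w)\<in>G \<longrightarrow> a v w \<le> b v w + d"
    and bal: "(\<exists>u. (u,v)\<in>G) \<longrightarrow> alpha_out G b v \<le> alpha_in G b v"
    and d: "0 \<le> d"
  shows "rhoR G a v \<le> 2 * d"
proof (cases "\<exists>u. (u,v)\<in>G")
  case False
  then have "{a u v | u. (u,v) \<in> G} = {}" "{a v w | w. (v,w) \<in> G} = {}" using ex by auto
  then show ?thesis unfolding rhoR_def alpha_in_def alpha_out_def using d by simp
next
  case True
  then obtain w1 where "(v,w1) \<in> G" using ex by blast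
  have ne1: "{a v w | w. (v,w) \<in> G} \<noteq> {}" using \<open>(v,w1) \<in> G\<close> by auto
  have "alpha_out G a v \<in> {a v w | w. (v,w) \<in> G}"
    unfolding alpha_out_def using Max_in[OF fin_out[OF fin, of a v] ne1] .
  then obtain w0 where w0: "(v,w0) \<in> G" "alpha_out G a v = a v w0" by auto
  have "b v w0 \<le> alpha_out G b v"
    unfolding alpha_out_def using w0 by (intro Max_ge[OF fin_out[OF fin, of b v]]) auto
  have ne2: "{b u v | u. (u,v) \<in> G} \<noteq> {}" using True by auto
  have "alpha_in G b v \<in> {b u v | u. (u,v) \<in> G}"
    unfolding alpha_in_def using Max_in[OF fin_in[OF fin, of b v] ne2] .
  then obtain u0 where u0: "(u0,v) \<in> G" "alpha_in G b v = b u0 v" by auto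
  have "a u0 v \<le> alpha_in G a v"
    unfolding alpha_in_def using u0 by (intro Max_ge[OF fin_in[OF fin, of a v]]) auto
  have "alpha_out G b v \<le> alpha_in G b v" using bal True by blast
  moreover have "a v w0 \<le> b v w0 + d" using outq w0 by blast
  moreover have "b u0 v - d \<le> a u0 v" using inq u0 by blast
  ultimately have "alpha_out G a v - alpha_in G a v \<le> 2 * d"
    using w0 u0 \<open>b v w0 \<le> alpha_out G b v\<close> \<open>a u0 v \<le> alpha_in G a v\<close> by linarith
  then show ?thesis unfolding rhoR_def using d by simp
qed

lemma in_out_ex:
  assumes dg: "digraph_on n G" and sc: "strongly_connected n G" and v: "v \<in> {1..n}"
  shows "(\<exists>u. (u,v)\<in>G) \<longleftrightarrow> (\<exists>w. (v,w) \<in> G)"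
proof
  assume "\<exists>u. (u,v)\<in>G"
  then obtain u where e: "(u,v) \<in> G" by blast
  then have "u \<in> {1..n}" using dg unfolding digraph_on_def by auto
  then have "(v,u) \<in> G\<^sup>*" using sc v unfolding strongly_connected_def by blast
  then show "\<exists>w. (v,w) \<in> G"
  proof (cases rule: converse_rtranclE)
    case base then show ?thesis using e by blast
  next
    case (step w) then show ?thesis by blast
  qed
next
  assume "\<exists>w. (v,w)\<in>G"
  then obtain w where e: "(v,w) \<in> G" by blast
  then have "w \<in> {1..n}" using dg unfolding digraph_on_def by auto
  then have "(w,v) \<in> G\<^sup>*" using sc v unfolding strongly_connected_def by blast
  then show "\<exists>u. (u,v) \<in> G"
  proof (cases rule: rtranclE)
    case base then show ?thesis using e by blast
  next
    case (step u) then show ?thesis by blast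
  qed
qed

lemma bound:
  assumes dg: "digraph_on n G" and sc: "strongly_connected n G" and fair: "fair n s"
    and B0: "\<forall>v\<in>{1..n}. 0 \<le> B v"
    and bal: "\<forall>v\<in>{1..n}. (\<exists>u. (u,v)\<in>G) \<longrightarrow>
               alpha_out G (\<lambda>x y. \<alpha> x y + B y - B x) v \<le> alpha_in G (\<lambda>x y. \<alpha> x y + B y - B x) v"
  shows "\<forall>v\<in>{1..n}. r_seq G \<alpha> s t v \<le> B v"
proof (induction t)
  case 0 then show ?case using B0 by simp
next
  case (Suc t)
  define a where "a = alpha_seq G \<alpha> s t"
  define v0 where "v0 = s (Suc t)"
  define r where "r = r_seq G \<alpha> s t"
  define b where "b = (\<lambda>x y. \<alpha> x y + B y - B x)"
  have IH: "\<forall>v\<in>{1..n}. r v \<le> B v" using Suc unfolding r_def .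
  have R: "r_seq G \<alpha> s (Suc t) = r(v0 := r v0 + rhoR G a v0 / 2)" unfolding a_def v0_def r_def by simp
  have v0: "v0 \<in> {1..n}" using fair unfolding fair_def v0_def by auto
  have fin: "finite G"
    using dg unfolding digraph_on_def by (rule finite_subset) simp
  have ar: "\<forall>x y. (x,y) \<in> G \<longrightarrow> a x y = \<alpha> x y + r y - r x" using alpha_r unfolding a_def r_def by blast
  have "rhoR G a v0 \<le> 2 * (B v0 - r v0)"
  proof (rule key[OF fin in_out_ex[OF dg sc v0], of b])
    show "\<forall>u. (u,v0)\<in>G \<longrightarrow> b u v0 - (B v0 - r v0) \<le> a u v0"
    proof (intro allI impI)
      fix u assume e: "(u,v0) \<in> G"
      then have "u \<in> {1..n}" using dg unfolding digraph_on_def by auto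
      then show "b u v0 - (B v0 - r v0) \<le> a u v0" using IH ar e unfolding b_def by fastforce
    qed
    show "\<forall>w. (v0,w)\<in>G \<longrightarrow> a v0 w \<le> b v0 w + (B v0 - r v0)"
    proof (intro allI impI)
      fix w assume e: "(v0,w) \<in> G"
      then have "w \<in> {1..n}" using dg unfolding digraph_on_def by auto
      then show "a v0 w \<le> b v0 w + (B v0 - r v0)" using IH ar e unfolding b_def by fastforce
    qed
    show "(\<exists>u. (u,v0)\<in>G) \<longrightarrow> alpha_out G b v0 \<le> alpha_in G b v0" using bal v0 unfolding b_def by blast
    show "0 \<le> B v0 - r v0" using IH v0 by auto
  qed
  then show ?case using IH unfolding R by auto
qed


lemma rtrancl_walk:
  assumes dg: "digraph_on n G" and "(x,y) \<in> G\<^sup>*" and x: "x \<in> {1..n}"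
  shows "\<exists>xs. walk n G xs \<and> hd xs = x \<and> last xs = y"
  using assms(2)
proof (induction rule: rtrancl_induct)
  case base then show ?case using x unfolding walk_def by (intro exI[of _ "[x]"]) auto
next
  case (step y z)
  then obtain xs where xs: "walk n G xs" "hd xs = x" "last xs = y" by blast
  have "z \<in> {1..n}" using step(2) dg unfolding digraph_on_def by auto
  then have "walk n G (xs @ [z])" using walk_snoc[OF xs(1)] xs(3) step(2) by simp
  moreover have "xs \<noteq> []" using xs(1) unfolding walk_def by simp
  ultimately show ?case using xs by (intro exI[of _ "xs @ [z]"]) auto
qed

lemma walk_butlast:
  assumes "walk n G (xs @ [y])" "xs \<noteq> []"
  shows "walk n G xs" "(last xs, y) \<in> G"
  using assms unfolding walk_def by (auto simp: successively_append_iff)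

lemma fin_lists: "finite {c. walk n G c \<and> P c \<and> length c \<le> m}"
  by (rule finite_subset[OF _ finite_lists_length_le[OF finite_atLeastAtMost[of 1 n], of m]])
     (auto simp: walk_def)

lemma balanced_exists:
  assumes dg: "digraph_on n G" and sc: "strongly_connected n G" and Gne: "G \<noteq> {}"
  shows "\<exists>B. (\<forall>v\<in>{1..n}. 0 \<le> B v) \<and> (\<forall>v\<in>{1..n}. (\<exists>u. (u,v)\<in>G) \<longrightarrow>
               alpha_out G (\<lambda>x y. \<alpha> x y + B y - B x) v \<le> alpha_in G (\<lambda>x y. \<alpha> x y + B y - B x) v)"
proof -
  have fin: "finite G" using dg unfolding digraph_on_def by (rule finite_subset) simp
  obtain u0 v0 where e0: "(u0,v0) \<in> G" using Gne by auto
  have uv0: "u0 \<in> {1..n}" "v0 \<in> {1..n}" using e0 dg unfolding digraph_on_def by auto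
  obtain xs0 where xs0: "walk n G xs0" "hd xs0 = v0" "last xs0 = u0"
    using rtrancl_walk[OF dg _ uv0(2)] sc uv0 unfolding strongly_connected_def by blast
  have "xs0 \<noteq> []" using xs0 unfolding walk_def by simp
  then have "cw n G (xs0 @ [v0])" using walk_snoc[OF xs0(1)] xs0 e0 uv0 unfolding cw_def
    by (cases xs0) auto
  then obtain c0 where c0: "cw n G c0" "length c0 \<le> n + 1" using cw_short_ex by blast
  define CS where "CS = {c. cw n G c \<and> length c \<le> n + 1}"
  define L where "L = (\<lambda>c. ww \<alpha> c / real (length c - 1)) ` CS"
  have finCS: "finite CS" unfolding CS_def cw_def using fin_lists[of n G "\<lambda>c. 2 \<le> length c \<and> hd c = last c" "n+1"]
    by (simp add: conj_commute conj_left_commute)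
  have neL: "L \<noteq> {}" unfolding L_def CS_def using c0 by auto
  have finL: "finite L" unfolding L_def using finCS by simp
  define l where "l = Max L"
  have shortle: "\<forall>c. cw n G c \<and> length c \<le> n+1 \<longrightarrow> val \<alpha> l c \<le> 0"
  proof (intro allI impI)
    fix c assume c: "cw n G c \<and> length c \<le> n+1"
    then have "ww \<alpha> c / real (length c - 1) \<le> l" unfolding l_def L_def CS_def
      using finL L_def CS_def by (intro Max_ge) auto
    moreover have "real (length c - 1) > 0" using c unfolding cw_def by auto
    ultimately show "val \<alpha> l c \<le> 0" unfolding val_def by (simp add: divide_le_eq)
  qed
  have cyc: "\<forall>c. cw n G c \<longrightarrow> val \<alpha> l c \<le> 0" using cw_val_le[OF shortle] by blast
  have "l \<in> L" unfolding l_def using finL neL by simp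
  then obtain cs where cs: "cw n G cs" "ww \<alpha> cs / real (length cs - 1) = l" unfolding L_def CS_def by auto
  have "real (length cs - 1) > 0" using cs unfolding cw_def by auto
  then have vcs: "val \<alpha> l cs = 0" using cs(2) unfolding val_def by (simp add: field_simps)
  define z where "z = hd cs"
  have z: "z \<in> {1..n}" using cs unfolding z_def cw_def walk_def by (cases cs) auto
  define S where "S v = val \<alpha> l ` {ys. walk n G ys \<and> (hd ys = z \<and> last ys = v) \<and> length ys \<le> n}" for v
  define p where "p v = Max (S v)" for v
  have finS: "finite (S v)" for v unfolding S_def using fin_lists[of n G "\<lambda>ys. hd ys = z \<and> last ys = v" n] by simp
  have neS: "S v \<noteq> {}" if v: "v \<in> {1..n}" for v
  proof -
    obtain xs where xs: "walk n G xs" "hd xs = z" "last xs = v"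
      using rtrancl_walk[OF dg _ z] sc z v unfolding strongly_connected_def by blast
    then obtain ys where "walk n G ys" "hd ys = z" "last ys = v" "length ys \<le> n"
      using path_short[OF cyc xs(1)] by metis
    then show ?thesis unfolding S_def by blast
  qed
  have pge: "val \<alpha> l xs \<le> p v" if xs: "walk n G xs" "hd xs = z" "last xs = v" for xs v
  proof -
    obtain ys where ys: "walk n G ys" "hd ys = z" "last ys = v" "length ys \<le> n" "val \<alpha> l xs \<le> val \<alpha> l ys"
      using path_short[OF cyc xs(1)] xs by metis
    have "val \<alpha> l ys \<in> S v" unfolding S_def using ys by blast
    then have "val \<alpha> l ys \<le> p v" unfolding p_def using finS by simp
    then show ?thesis using ys by linarith
  qed
  have pin: "\<exists>ys. walk n G ys \<and> hd ys = z \<and> last ys = v \<and> length ys \<le> n \<and> val \<alpha> l ys = p v"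
    if v: "v \<in> {1..n}" for v
  proof -
    have "p v \<in> S v" unfolding p_def using finS neS[OF v] by simp
    then show ?thesis unfolding S_def by auto
  qed
  have edge: "p x + \<alpha> x y - l \<le> p y" if e: "(x,y) \<in> G" for x y
  proof -
    have xy: "x \<in> {1..n}" "y \<in> {1..n}" using e dg unfolding digraph_on_def by auto
    obtain ys where ys: "walk n G ys" "hd ys = z" "last ys = x" "val \<alpha> l ys = p x" using pin[OF xy(1)] by blast
    have ne: "ys \<noteq> []" using ys unfolding walk_def by simp
    have "walk n G (ys @ [y])" using walk_snoc[OF ys(1)] ys(3) e xy by simp
    moreover have "hd (ys @ [y]) = z" "last (ys @ [y]) = y" using ne ys by auto
    ultimately have "val \<alpha> l (ys @ [y]) \<le> p y" using pge by blast
    then show ?thesis using val_snoc[OF ne] ys by simp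
  qed
  have pz: "p z \<le> 0"
  proof -
    obtain ys where ys: "walk n G ys" "hd ys = z" "last ys = z" "val \<alpha> l ys = p z" using pin[OF z] by blast
    show ?thesis
    proof (cases "length ys \<ge> 2")
      case True then have "cw n G ys" using ys unfolding cw_def by simp
      then show ?thesis using cyc ys by fastforce
    next
      case False
      then obtain q where "ys = [q]" using ys unfolding walk_def
        by (cases ys) (auto simp: Suc_le_eq)
      then show ?thesis using ys unfolding val_def by simp
    qed
  qed
  have tight: "\<exists>x. (x,v) \<in> G \<and> p v \<le> p x + \<alpha> x v - l" if v: "v \<in> {1..n}" for v
  proof (cases "v = z")
    case False
    obtain ys where ys: "walk n G ys" "hd ys = z" "last ys = v" "val \<alpha> l ys = p v" using pin[OF v] by blast
    have ne: "ys \<noteq> []" using ys unfolding walk_def by simp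
    define xs where "xs = butlast ys"
    have ysd: "ys = xs @ [v]" unfolding xs_def using ne ys(3) append_butlast_last_id by metis
    have xne: "xs \<noteq> []" using ysd ys(2) False by auto
    have wx: "walk n G xs" "(last xs, v) \<in> G" using walk_butlast[of n G xs v] ys(1) ysd xne by auto
    have "hd xs = z" using ysd ys(2) xne by simp
    then have "val \<alpha> l xs \<le> p (last xs)" using pge wx by blast
    moreover have "val \<alpha> l ys = val \<alpha> l xs + \<alpha> (last xs) v - l" using ysd val_snoc[OF xne] by simp
    ultimately show ?thesis using wx ys by (intro exI[of _ "last xs"]) auto
  next
    case True
    have ne: "cs \<noteq> []" using cs unfolding cw_def by auto
    define xs where "xs = butlast cs"
    have lz: "last cs = z" using cs unfolding z_def cw_def by simp
    have csd: "cs = xs @ [z]" unfolding xs_def using ne lz append_butlast_last_id by metis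
    have xne: "xs \<noteq> []" using csd cs unfolding cw_def by auto
    have wx: "walk n G xs" "(last xs, z) \<in> G" using walk_butlast[of n G xs z] cs csd xne unfolding cw_def by auto
    have "hd xs = z" using csd xne unfolding z_def by (metis hd_append2)
    then have "val \<alpha> l xs \<le> p (last xs)" using pge wx by blast
    moreover have "val \<alpha> l cs = val \<alpha> l xs + \<alpha> (last xs) z - l" using csd val_snoc[OF xne] by simp
    ultimately show ?thesis using wx vcs pz True by (intro exI[of _ "last xs"]) auto
  qed
  define P where "P = Max (p ` {1..n})"
  define B where "B v = P - p v" for v
  have "n \<ge> 1" using z by simp
  have B0: "\<forall>v\<in>{1..n}. 0 \<le> B v" unfolding B_def P_def using Max_ge by auto
  have bal: "alpha_out G (\<lambda>x y. \<alpha> x y + B y - B x) v \<le> alpha_in G (\<lambda>x y. \<alpha> x y + B y - B x) v"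
    if v: "v \<in> {1..n}" and ex: "\<exists>u. (u,v)\<in>G" for v
  proof -
    let ?b = "\<lambda>x y. \<alpha> x y + B y - B x"
    have bb: "?b x y = \<alpha> x y + p x - p y" for x y unfolding B_def by simp
    obtain x where x: "(x,v) \<in> G" "p v \<le> p x + \<alpha> x v - l" using tight[OF v] by blast
    have "l \<le> ?b x v" using x bb[of x v] by linarith
    also have "?b x v \<le> alpha_in G ?b v"
      unfolding alpha_in_def using x by (intro Max_ge[OF fin_in[OF fin, of ?b v]]) auto
    finally have li: "l \<le> alpha_in G ?b v" .
    have "\<exists>w. (v,w) \<in> G" using in_out_ex[OF dg sc v] ex by blast
    then have ne: "{?b v w | w. (v,w) \<in> G} \<noteq> {}" by auto
    have "alpha_out G ?b v \<le> l"
      unfolding alpha_out_def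
    proof (rule Max.boundedI[OF fin_out[OF fin, of ?b v] ne])
      fix q assume "q \<in> {?b v w | w. (v,w) \<in> G}"
      then obtain w where w: "(v,w) \<in> G" "q = ?b v w" by blast
      show "q \<le> l" using edge[OF w(1)] w(2) bb by simp
    qed
    then show ?thesis using li by linarith
  qed
  show ?thesis using B0 bal by blast
qed

theorem lemma1:
  fixes n :: nat and G :: "(nat \<times> nat) set" and \<alpha> :: "nat \<Rightarrow> nat \<Rightarrow> real" and s :: "nat \<Rightarrow> nat"
  assumes "digraph_on n G" and "strongly_connected n G" and "fair n s"
  shows "(\<forall>v\<in>{1..n}. mono (\<lambda>t. r_seq G \<alpha> s t v))
       \<and> (\<forall>v\<in>{1..n}. \<exists>B. \<forall>t. r_seq G \<alpha> s t v \<le> B)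
       \<and> (\<exists>rstar :: nat \<Rightarrow> real. \<forall>v\<in>{1..n}. (\<lambda>t. r_seq G \<alpha> s t v) \<longlonglongrightarrow> rstar v)"
proof -
  obtain B where B0: "\<forall>v\<in>{1..n}. 0 \<le> B v" and bal: "\<forall>v\<in>{1..n}. (\<exists>u. (u,v)\<in>G) \<longrightarrow>
               alpha_out G (\<lambda>x y. \<alpha> x y + B y - B x) v \<le> alpha_in G (\<lambda>x y. \<alpha> x y + B y - B x) v"
  proof (cases "G = {}")
    case True
    then show ?thesis using that[of "\<lambda>_. 0"] by auto
  next
    case False
    then show ?thesis using that balanced_exists[OF assms(1,2) False, of \<alpha>] by blast
  qed
  have bd: "\<forall>v\<in>{1..n}. r_seq G \<alpha> s t v \<le> B v" for t
    using bound[OF assms B0 bal] .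
  have mo: "\<forall>v\<in>{1..n}. mono (\<lambda>t. r_seq G \<alpha> s t v)" using r_mono by blast
  have bx: "\<forall>v\<in>{1..n}. \<exists>B. \<forall>t. r_seq G \<alpha> s t v \<le> B" using bd by blast
  have "\<forall>v\<in>{1..n}. (\<lambda>t. r_seq G \<alpha> s t v) \<longlonglongrightarrow> (SUP t. r_seq G \<alpha> s t v)"
  proof
    fix v assume v: "v \<in> {1..n}"
    have "bdd_above (range (\<lambda>t. r_seq G \<alpha> s t v))" using bd v by (intro bdd_aboveI2[of _ _ "B v"]) auto
    then show "(\<lambda>t. r_seq G \<alpha> s t v) \<longlonglongrightarrow> (SUP t. r_seq G \<alpha> s t v)"
      using LIMSEQ_incseq_SUP r_mono by blast
  qed
  then have "\<exists>rstar :: nat \<Rightarrow> real. \<forall>v\<in>{1..n}. (\<lambda>t. r_seq G \<alpha> s t v) \<longlonglongrightarrow> rstar v"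
    by (intro exI[of _ "\<lambda>v. SUP t. r_seq G \<alpha> s t v"])
  then show ?thesis using mo bx by blast
qed

end
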